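(* For every integer $n\ge 0$, $$\Phi^{(1)}[a; b, b'; cq^{-n}; x, y] = \frac{1}{(q/c; q)_n} \sum_{k=0}^n \begin{bmatrix} n \\ k \end{bmatrix} (-c)^{k-n} q^{\binom{n+1-k}{2}} \Phi^{(1)}[a; b, b'; c; xq^k, yq^k]$$ and $$\Phi^{(1)}[a; b, b'; cq^n; x, y] = \sum_{k=0}^n \begin{bmatrix} n \\ k \end{bmatrix} c^k q^{2\binom{k}{2}} (cq^k; q)_{n-k}\, \Phi^{(1)}[a; b, b'; cq^k; xq^k, yq^k].$$
   Context: Let $q$ be a complex number with $0<|q|<1$. For complex $z$ and integer $m\ge 0$, $(z;q)_m=\prod_{j=0}^{m-1}(1-zq^j)$, with $(z;q)_0=1$. For integers $0\le k\le n$, $\begin{bmatrix} n \\ k \end{bmatrix}=\frac{(q;q)_n}{(q;q)_k(q;q)_{n-k}}$ is the $q$-binomial coefficient, and $\binom{j}{2}=j(j-1)/2$. The $q$-Appell function $\Phi^{(1)}$ is $$\Phi^{(1)}[a; b, b'; c; x, y] = \sum_{m, n \geq 0} \frac{(a; q)_{m+n} (b; q)_m (b'; q)_n}{(q; q)_m (q; q)_n (c; q)_{m+n}} x^m y^n.$$ Identities are understood as identities of power series in $x,y$ (formal, or convergent for small $|x|,|y|$), with complex parameters chosen so that no denominator occurring vanishes. *)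

theory Defs
  imports "HOL-Analysis.Analysis"
begin

definition qpoch :: "complex \<Rightarrow> complex \<Rightarrow> nat \<Rightarrow> complex" where
  "qpoch z q m = (\<Prod>j<m. (1 - z * q ^ j))"

definition qbinom :: "complex \<Rightarrow> nat \<Rightarrow> nat \<Rightarrow> complex" where
  "qbinom q n k = qpoch q q n / (qpoch q q k * qpoch q q (n - k))"

definition qAppell1 :: "complex \<Rightarrow> complex \<Rightarrow> complex \<Rightarrow> complex \<Rightarrow> complex \<Rightarrow> complex \<Rightarrow> complex \<Rightarrow> complex" where
  "qAppell1 q a b b' c x y =
     (\<Sum>\<^sub>\<infinity>(i, j)\<in>UNIV.
        qpoch a q (i + j) * qpoch b q i * qpoch b' q j
        / (qpoch q q i * qpoch q q j * qpoch c q (i + j)) * x ^ i * y ^ j)"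

end

theory Submission
  imports Defs
begin

lemma qpoch_Suc: "qpoch z q (Suc m) = qpoch z q m * (1 - z * q ^ m)"
  by (simp add: qpoch_def)

lemma qpoch_0[simp]: "qpoch z q 0 = 1"
  by (simp add: qpoch_def)

lemma qpoch_add: "qpoch z q (m + n) = qpoch z q m * qpoch (z * q ^ m) q n"
  by (induction n) (simp_all add: qpoch_Suc power_add mult_ac)

lemma qpoch_qq_nz:
  assumes "norm q < 1" shows "qpoch q q m \<noteq> 0"
proof -
  have "1 - q * q ^ j \<noteq> 0" for j
  proof
    assume "1 - q * q ^ j = 0"
    hence "q ^ Suc j = 1" by simp
    hence "norm q ^ Suc j = 1" by (metis norm_one norm_power)
    moreover have "norm q ^ Suc j < 1" using assms power_less_one_iff[of "norm q" "Suc j"]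
      by simp
    ultimately show False by simp
  qed
  thus ?thesis by (simp add: qpoch_def)
qed

lemma qbinom_0: assumes "norm q < 1" shows "qbinom q n 0 = 1"
  using qpoch_qq_nz[OF assms, of n] by (simp add: qbinom_def)

lemma qbinom_n: assumes "norm q < 1" shows "qbinom q n n = 1"
  using qpoch_qq_nz[OF assms, of n] by (simp add: qbinom_def)

lemma pasc_abs1:
  fixes A B Q s t :: complex
  assumes "A \<noteq> 0" "B \<noteq> 0" "1 - s \<noteq> 0" "1 - t \<noteq> 0"
  shows "Q * (1 - s * t) / (A * (1 - s) * (B * (1 - t))) = Q / (A * (1 - s) * B) + t * (Q / (A * (B * (1 - t))))"
proof -
  define u v where "u = 1 - s" and "v = 1 - t"
  have s: "s = 1 - u" and t: "t = 1 - v" by (simp_all add: u_def v_def)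
  have "u \<noteq> 0" "v \<noteq> 0" using assms by (simp_all add: u_def v_def)
  then show ?thesis unfolding s t using assms(1,2) by (simp add: field_simps)
qed

lemma pasc_abs2:
  fixes A B Q s t :: complex
  assumes "A \<noteq> 0" "B \<noteq> 0" "1 - s \<noteq> 0" "1 - t \<noteq> 0"
  shows "Q * (1 - s * t) / (A * (1 - s) * (B * (1 - t))) = s * (Q / (A * (1 - s) * B)) + (Q / (A * (B * (1 - t))))"
proof -
  define u v where "u = 1 - s" and "v = 1 - t"
  have s: "s = 1 - u" and t: "t = 1 - v" by (simp_all add: u_def v_def)
  have "u \<noteq> 0" "v \<noteq> 0" using assms by (simp_all add: u_def v_def)
  then show ?thesis unfolding s t using assms(1,2) by (simp add: field_simps)
qed

lemma pascal1:
  assumes q: "norm q < 1" and k: "k < n"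
  shows "qbinom q (Suc n) (Suc k) = qbinom q n (Suc k) + q ^ (n - k) * qbinom q n k"
proof -
  obtain m where n: "n = Suc k + m" using k by (metis add_Suc less_iff_Suc_add)
  have nz: "qpoch q q j \<noteq> 0" for j using qpoch_qq_nz[OF q] .
  have nz1: "1 - q * q ^ j \<noteq> 0" for j using nz[of "Suc j"] by (simp add: qpoch_Suc)
  have e1: "n - Suc k = m" "Suc n - Suc k = Suc m" "n - k = Suc m" using n by auto
  show ?thesis
  proof -
    have eq: "q * q ^ n = (q * q ^ k) * (q * q ^ m)" by (simp add: n power_add)
    show ?thesis unfolding qbinom_def e1 qpoch_Suc eq
      using pasc_abs1[OF nz[of k] nz[of m] nz1[of k] nz1[of m], of "qpoch q q n"]
      by (simp add: mult_ac)
  qed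
qed

lemma pascal2:
  assumes q: "norm q < 1" and k: "k < n"
  shows "qbinom q (Suc n) (Suc k) = q ^ Suc k * qbinom q n (Suc k) + qbinom q n k"
proof -
  obtain m where n: "n = Suc k + m" using k by (metis add_Suc less_iff_Suc_add)
  have nz: "qpoch q q j \<noteq> 0" for j using qpoch_qq_nz[OF q] .
  have nz1: "1 - q * q ^ j \<noteq> 0" for j using nz[of "Suc j"] by (simp add: qpoch_Suc)
  have e1: "n - Suc k = m" "Suc n - Suc k = Suc m" "n - k = Suc m" using n by auto
  show ?thesis
  proof -
    have eq: "q * q ^ n = (q * q ^ k) * (q * q ^ m)" by (simp add: n power_add)
    show ?thesis unfolding qbinom_def e1 qpoch_Suc eq
      using pasc_abs2[OF nz[of k] nz[of m] nz1[of k] nz1[of m], of "qpoch q q n"]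
      by (simp add: mult_ac)
  qed
qed

lemma split1:
  assumes q: "norm q < 1"
  shows "(\<Sum>k\<le>Suc n. qbinom q (Suc n) k * f k) =
    (\<Sum>k\<le>n. qbinom q n k * f k) + (\<Sum>k\<le>n. q ^ (n - k) * qbinom q n k * f (Suc k))"
proof -
  have "(\<Sum>k\<le>Suc n. qbinom q (Suc n) k * f k) = f 0 + (\<Sum>k<n. qbinom q (Suc n) (Suc k) * f (Suc k)) + f (Suc n)"
    by (subst sum.atMost_Suc_shift) (simp add: qbinom_0[OF q] qbinom_n[OF q] flip: lessThan_Suc_atMost)
  also have "(\<Sum>k<n. qbinom q (Suc n) (Suc k) * f (Suc k)) =
     (\<Sum>k<n. qbinom q n (Suc k) * f (Suc k)) + (\<Sum>k<n. q ^ (n - k) * qbinom q n k * f (Suc k))"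
    by (simp add: pascal1[OF q] sum.distrib[symmetric] algebra_simps)
  moreover have "(\<Sum>k\<le>n. qbinom q n k * f k) = f 0 + (\<Sum>k<n. qbinom q n (Suc k) * f (Suc k))"
    by (subst lessThan_Suc_atMost[symmetric], subst sum.lessThan_Suc_shift) (simp add: qbinom_0[OF q])
  moreover have "(\<Sum>k\<le>n. q ^ (n - k) * qbinom q n k * f (Suc k)) = (\<Sum>k<n. q ^ (n - k) * qbinom q n k * f (Suc k)) + f (Suc n)"
    by (simp add: qbinom_n[OF q] flip: lessThan_Suc_atMost)
  ultimately show ?thesis by (simp add: algebra_simps)
qed

lemma split2:
  assumes q: "norm q < 1"
  shows "(\<Sum>k\<le>Suc n. qbinom q (Suc n) k * f k) =
    (\<Sum>k\<le>n. q ^ k * qbinom q n k * f k) + (\<Sum>k\<le>n. qbinom q n k * f (Suc k))"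
proof -
  have "(\<Sum>k\<le>Suc n. qbinom q (Suc n) k * f k) = f 0 + (\<Sum>k<n. qbinom q (Suc n) (Suc k) * f (Suc k)) + f (Suc n)"
    by (subst sum.atMost_Suc_shift) (simp add: qbinom_0[OF q] qbinom_n[OF q] flip: lessThan_Suc_atMost)
  also have "(\<Sum>k<n. qbinom q (Suc n) (Suc k) * f (Suc k)) =
     (\<Sum>k<n. q ^ Suc k * qbinom q n (Suc k) * f (Suc k)) + (\<Sum>k<n. qbinom q n k * f (Suc k))"
    by (simp add: pascal2[OF q] sum.distrib[symmetric] algebra_simps)
  moreover have "(\<Sum>k\<le>n. q ^ k * qbinom q n k * f k) = f 0 + (\<Sum>k<n. q ^ Suc k * qbinom q n (Suc k) * f (Suc k))"
    by (subst lessThan_Suc_atMost[symmetric], subst sum.lessThan_Suc_shift) (simp add: qbinom_0[OF q])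
  moreover have "(\<Sum>k\<le>n. qbinom q n k * f (Suc k)) = (\<Sum>k<n. qbinom q n k * f (Suc k)) + f (Suc n)"
    by (simp add: qbinom_n[OF q] flip: lessThan_Suc_atMost)
  ultimately show ?thesis by (simp add: algebra_simps)
qed

lemma choose2_Suc: "Suc k choose 2 = k + (k choose 2)"
  by (simp add: numeral_2_eq_2)

lemma identS:
  assumes q: "norm q < 1"
  shows "(\<Sum>k\<le>n. qbinom q n k * (d ^ k * q ^ (2 * (k choose 2)) * qpoch (d * q ^ k) q (n - k))) = 1"
proof (induction n arbitrary: d)
  case 0
  then show ?case by (simp add: qbinom_0[OF q] numeral_2_eq_2)
next
  case (Suc n)
  let ?f = "\<lambda>k. d ^ k * q ^ (2 * (k choose 2)) * qpoch (d * q ^ k) q (Suc n - k)"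
  have "(\<Sum>k\<le>Suc n. qbinom q (Suc n) k * ?f k) =
    (\<Sum>k\<le>n. qbinom q n k * ?f k) + (\<Sum>k\<le>n. q ^ (n - k) * qbinom q n k * ?f (Suc k))"
    by (rule split1[OF q])
  also have "(\<Sum>k\<le>n. qbinom q n k * ?f k) =
     (1 - d * q ^ n) * (\<Sum>k\<le>n. qbinom q n k * (d ^ k * q ^ (2 * (k choose 2)) * qpoch (d * q ^ k) q (n - k)))"
    unfolding sum_distrib_left
  proof (rule sum.cong[OF refl])
    fix k assume "k \<in> {..n}"
    hence k: "k \<le> n" by simp
    have e: "Suc n - k = Suc (n - k)" using k by simp
    have e2: "d * q ^ k * q ^ (n - k) = d * q ^ n" using k by (simp add: mult.assoc flip: power_add)
    show "qbinom q n k * ?f k = (1 - d * q ^ n) * (qbinom q n k * (d ^ k * q ^ (2 * (k choose 2)) * qpoch (d * q ^ k) q (n - k)))"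
      unfolding e qpoch_Suc e2 by (simp add: mult_ac)
  qed
  also have "(\<Sum>k\<le>n. q ^ (n - k) * qbinom q n k * ?f (Suc k)) =
     (d * q ^ n) * (\<Sum>k\<le>n. qbinom q n k * ((d * q) ^ k * q ^ (2 * (k choose 2)) * qpoch ((d * q) * q ^ k) q (n - k)))"
    unfolding sum_distrib_left
  proof (rule sum.cong[OF refl])
    fix k assume "k \<in> {..n}"
    hence k: "k \<le> n" by simp
    have e: "Suc n - Suc k = n - k" by simp
    have e3: "n - k + 2 * (k + (k choose 2)) = n + k + 2 * (k choose 2)" using k by simp
    have e4: "q ^ (n - k) * q ^ (2 * (Suc k choose 2)) = q ^ n * q ^ k * q ^ (2 * (k choose 2))"
      unfolding choose2_Suc by (simp only: e3 flip: power_add)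
    have e5: "d * q ^ Suc k = d * q * q ^ k" by (simp add: mult_ac)
    show "q ^ (n - k) * qbinom q n k * ?f (Suc k) = (d * q ^ n) * (qbinom q n k * ((d * q) ^ k * q ^ (2 * (k choose 2)) * qpoch ((d * q) * q ^ k) q (n - k)))"
      unfolding e e5 using e4 by (simp add: power_mult_distrib mult_ac)
  qed
  finally show ?case using Suc.IH[of d] Suc.IH[of "d * q"] by simp
qed

lemma identR:
  assumes q: "norm q < 1"
  shows "(\<Sum>k\<le>n. qbinom q n k * ((- z) ^ k * q ^ ((n + 1 - k) choose 2))) = (\<Prod>i<n. q ^ Suc i - z)"
proof (induction n)
  case 0
  then show ?case by (simp add: qbinom_0[OF q] numeral_2_eq_2)
next
  case (Suc n)
  let ?f = "\<lambda>k. (- z) ^ k * q ^ ((Suc n + 1 - k) choose 2)"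
  have "(\<Sum>k\<le>Suc n. qbinom q (Suc n) k * ?f k) =
    (\<Sum>k\<le>n. q ^ k * qbinom q n k * ?f k) + (\<Sum>k\<le>n. qbinom q n k * ?f (Suc k))"
    by (rule split2[OF q])
  also have "(\<Sum>k\<le>n. q ^ k * qbinom q n k * ?f k) =
     q ^ Suc n * (\<Sum>k\<le>n. qbinom q n k * ((- z) ^ k * q ^ ((n + 1 - k) choose 2)))"
    unfolding sum_distrib_left
  proof (rule sum.cong[OF refl])
    fix k assume "k \<in> {..n}"
    hence k: "k \<le> n" by simp
    have e: "Suc n + 1 - k = Suc (n + 1 - k)" using k by simp
    have e3: "k + (n + 1 - k + ((n + 1 - k) choose 2)) = Suc n + ((n + 1 - k) choose 2)" using k by simp
    have e4: "q ^ k * q ^ (Suc (n + 1 - k) choose 2) = q ^ Suc n * q ^ ((n + 1 - k) choose 2)"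
      unfolding choose2_Suc by (simp only: e3 flip: power_add)
    show "q ^ k * qbinom q n k * ?f k = q ^ Suc n * (qbinom q n k * ((- z) ^ k * q ^ ((n + 1 - k) choose 2)))"
      unfolding e using e4 by (simp add: mult_ac)
  qed
  also have "(\<Sum>k\<le>n. qbinom q n k * ?f (Suc k)) =
     (- z) * (\<Sum>k\<le>n. qbinom q n k * ((- z) ^ k * q ^ ((n + 1 - k) choose 2)))"
    unfolding sum_distrib_left by (rule sum.cong[OF refl]) (simp add: mult_ac)
  finally show ?case using Suc.IH by (simp add: algebra_simps)
qed

lemma scalarL2:
  assumes q: "norm q < 1" and P: "\<forall>m. qpoch c q m \<noteq> 0"
  shows "1 / qpoch (c * q ^ n) q N = (\<Sum>k=0..n. qbinom q n k * c ^ k * q ^ (2 * (k choose 2))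
            * qpoch (c * q ^ k) q (n - k) * (q ^ k) ^ N / qpoch (c * q ^ k) q N)"
proof -
  define d where "d = c * q ^ N"
  have S: "(\<Sum>k\<le>n. qbinom q n k * (d ^ k * q ^ (2 * (k choose 2)) * qpoch (d * q ^ k) q (n - k))) = 1"
    by (rule identS[OF q])
  have L: "1 / qpoch (c * q ^ n) q N = qpoch c q n / qpoch c q (n + N)"
    using P by (simp add: qpoch_add)
  have "(\<Sum>k=0..n. qbinom q n k * c ^ k * q ^ (2 * (k choose 2))
            * qpoch (c * q ^ k) q (n - k) * (q ^ k) ^ N / qpoch (c * q ^ k) q N)
      = (\<Sum>k\<le>n. qpoch c q n / qpoch c q (n + N) * (qbinom q n k * (d ^ k * q ^ (2 * (k choose 2)) * qpoch (d * q ^ k) q (n - k))))"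
    unfolding atLeast0AtMost
  proof (rule sum.cong[OF refl])
    fix k assume "k \<in> {..n}"
    hence k: "k \<le> n" by simp
    define A X Y Z where "A = qpoch c q k" and "X = qpoch (c * q ^ k) q (n - k)"
      and "Y = qpoch (c * q ^ k) q N" and "Z = qpoch (d * q ^ k) q (n - k)"
    have 1: "qpoch c q n = A * X" unfolding A_def X_def using qpoch_add[of c q k "n - k"] k by simp
    have 2: "qpoch c q (k + N) = A * Y" unfolding A_def Y_def using qpoch_add[of c q k N] by simp
    have 3: "qpoch c q (n + N) = A * Y * Z"
    proof -
      have "qpoch c q (k + N + (n - k)) = qpoch c q (k + N) * qpoch (c * q ^ (k + N)) q (n - k)"
        by (rule qpoch_add)
      moreover have "k + N + (n - k) = n + N" using k by simp
      moreover have "c * q ^ (k + N) = d * q ^ k" by (simp add: d_def power_add mult_ac)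
      ultimately show ?thesis using 2 Z_def by simp
    qed
    have nz: "A \<noteq> 0" "Y \<noteq> 0" "Z \<noteq> 0" using P[rule_format, of "n + N"] 3 by auto
    have pw: "(q ^ k) ^ N = (q ^ N) ^ k" by (simp flip: power_mult add: mult.commute)
    show "qbinom q n k * c ^ k * q ^ (2 * (k choose 2)) * qpoch (c * q ^ k) q (n - k) * (q ^ k) ^ N / qpoch (c * q ^ k) q N
        = qpoch c q n / qpoch c q (n + N) * (qbinom q n k * (d ^ k * q ^ (2 * (k choose 2)) * qpoch (d * q ^ k) q (n - k)))"
      unfolding 1 3 X_def[symmetric] Y_def[symmetric] Z_def[symmetric] using nz
      by (simp add: d_def pw power_mult_distrib field_simps)
  qed
  also have "\<dots> = qpoch c q n / qpoch c q (n + N)"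
    by (subst sum_distrib_left[symmetric]) (simp add: S)
  finally show ?thesis using L by simp
qed

lemma prodshift: "(\<Prod>i<n. q ^ Suc i - v * q ^ n) = (\<Prod>i<n. q ^ Suc i) * qpoch v q n"
proof (induction n arbitrary: v)
  case 0
  then show ?case by simp
next
  case (Suc n)
  have vq: "v * q ^ Suc n = (v * q) * q ^ n" by (simp add: mult_ac)
  have "(\<Prod>i<Suc n. q ^ Suc i - v * q ^ Suc n) = (\<Prod>i<n. q ^ Suc i - (v * q) * q ^ n) * (q ^ Suc n - v * q ^ Suc n)"
    by (simp only: prod.lessThan_Suc vq)
  also have "\<dots> = (\<Prod>i<n. q ^ Suc i) * qpoch (v * q) q n * (q ^ Suc n - v * q ^ Suc n)"
    using Suc.IH[of "v * q"] by simp
  also have "qpoch v q (Suc n) = (1 - v) * qpoch (v * q) q n"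
    using qpoch_add[of v q 1 n] by (simp add: qpoch_def)
  ultimately show ?case by (simp only: prod.lessThan_Suc) (simp add: algebra_simps)
qed

lemma scalarL1:
  assumes q: "norm q < 1" "q \<noteq> 0" and c: "c \<noteq> 0"
    and P1: "qpoch c q N \<noteq> 0" and P2: "qpoch (c / q ^ n) q N \<noteq> 0" and Q: "qpoch (q / c) q n \<noteq> 0"
  shows "1 / qpoch (c / q ^ n) q N = 1 / qpoch (q / c) q n * (\<Sum>k=0..n. qbinom q n k * (- c) powi (int k - int n)
      * q ^ ((n + 1 - k) choose 2) * (q ^ k) ^ N / qpoch c q N)"
proof -
  define u where "u = c / q ^ n"
  have cu: "c = u * q ^ n" using q by (simp add: u_def)
  define Qp where "Qp = (\<Prod>i<n. q ^ Suc i)"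
  have Qp: "Qp \<noteq> 0" using q by (simp add: Qp_def)
  have sum: "(\<Sum>k=0..n. qbinom q n k * (- c) powi (int k - int n) * q ^ ((n + 1 - k) choose 2) * (q ^ k) ^ N / qpoch c q N)
     = (\<Sum>k\<le>n. qbinom q n k * ((- (c * q ^ N)) ^ k * q ^ ((n + 1 - k) choose 2))) / ((- c) ^ n * qpoch c q N)"
    unfolding atLeast0AtMost sum_divide_distrib
  proof (rule sum.cong[OF refl])
    fix k
    have "(- c) powi (int k - int n) = (- c) ^ k / (- c) ^ n"
      using c by (simp add: power_int_diff)
    moreover have "(q ^ k) ^ N = (q ^ N) ^ k" by (simp flip: power_mult add: mult.commute)
    moreover have "(- (c * q ^ N)) ^ k = (- c) ^ k * (q ^ N) ^ k"
      by (simp flip: power_mult_distrib)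
    ultimately show "qbinom q n k * (- c) powi (int k - int n) * q ^ ((n + 1 - k) choose 2) * (q ^ k) ^ N / qpoch c q N
       = qbinom q n k * ((- (c * q ^ N)) ^ k * q ^ ((n + 1 - k) choose 2)) / ((- c) ^ n * qpoch c q N)"
      by (simp add: power_mult_distrib field_simps)
  qed
  have R: "(\<Sum>k\<le>n. qbinom q n k * ((- (c * q ^ N)) ^ k * q ^ ((n + 1 - k) choose 2))) = Qp * qpoch (u * q ^ N) q n"
    unfolding identR[OF q(1)] Qp_def cu using prodshift[of q "u * q ^ N" n] by (simp add: mult_ac)
  have Qc: "qpoch (q / c) q n * (- c) ^ n = Qp * qpoch u q n"
  proof -
    have "qpoch (q / c) q n * (- c) ^ n = (\<Prod>i<n. (1 - q / c * q ^ i) * (- c))"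
      by (simp only: qpoch_def prod.distrib prod_constant card_lessThan)
    also have "\<dots> = (\<Prod>i<n. q ^ Suc i - c)"
      using c by (intro prod.cong) (auto simp: field_simps)
    also have "\<dots> = Qp * qpoch u q n" unfolding Qp_def cu by (rule prodshift)
    finally show ?thesis .
  qed
  have un: "qpoch u q n \<noteq> 0" using Qc Q c by auto
  have key: "qpoch u q n * qpoch c q N = qpoch u q N * qpoch (u * q ^ N) q n"
    unfolding cu using qpoch_add[of u q n N] qpoch_add[of u q N n] by (simp add: add.commute)
  have P2': "qpoch u q N \<noteq> 0" using P2 u_def by simp
  have "1 / qpoch (q / c) q n * (Qp * qpoch (u * q ^ N) q n / ((- c) ^ n * qpoch c q N))
      = Qp * qpoch (u * q ^ N) q n / ((qpoch (q / c) q n * (- c) ^ n) * qpoch c q N)"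
    by (simp add: field_simps)
  also have "\<dots> = qpoch (u * q ^ N) q n / (qpoch u q n * qpoch c q N)"
    unfolding Qc using Qp by (simp add: field_simps)
  also have "\<dots> = 1 / qpoch u q N"
  proof -
    have "qpoch (u * q ^ N) q n \<noteq> 0"
    proof
      assume "qpoch (u * q ^ N) q n = 0"
      hence "qpoch u q n * qpoch c q N = 0" unfolding key by simp
      thus False using un P1 by simp
    qed
    thus ?thesis unfolding key using P2' by (simp add: field_simps)
  qed
  finally show ?thesis unfolding sum R u_def by simp
qed

lemma delta_exists:
  fixes q z :: complex
  assumes q: "norm q < 1" and nz: "\<forall>j. 1 - z * q ^ j \<noteq> 0"
  shows "\<exists>\<delta>>0. \<delta> \<le> 1 \<and> (\<forall>j. \<delta> \<le> norm (1 - z * q ^ j))"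
proof -
  obtain J where J: "norm q ^ J < 1 / (2 * (norm z + 1))"
    using real_arch_pow_inv[of "1 / (2 * (norm z + 1))" "norm q"] q
    by (smt (verit) divide_pos_pos norm_ge_zero)
  define S where "S = insert (1/2) ((\<lambda>j. norm (1 - z * q ^ j)) ` {..<J})"
  have fin: "finite S" "S \<noteq> {}" by (auto simp: S_def)
  have pos: "\<forall>s\<in>S. 0 < s" using nz by (auto simp: S_def)
  define \<delta> where "\<delta> = Min S"
  have "\<delta> > 0" using fin pos by (simp add: \<delta>_def)
  moreover have "\<delta> \<le> 1/2" unfolding \<delta>_def using fin by (intro Min_le) (auto simp: S_def)
  moreover have "\<delta> \<le> norm (1 - z * q ^ j)" for j
  proof (cases "j < J")
    case True
    then show ?thesis unfolding \<delta>_def using fin by (intro Min_le) (auto simp: S_def)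
  next
    case False
    have "norm q ^ j \<le> norm q ^ J" using False q by (intro power_decreasing) auto
    hence "norm (z * q ^ j) \<le> norm z * norm q ^ J"
      by (simp add: norm_mult norm_power mult_left_mono)
    also have "\<dots> \<le> norm z * (1 / (2 * (norm z + 1)))"
      using J by (intro mult_left_mono) auto
    also have "\<dots> \<le> 1/2"
    proof -
      have pos: "0 < norm z + 1" by (smt (verit) norm_ge_zero)
      thus ?thesis by (simp add: field_simps)
    qed
    finally have "norm (z * q ^ j) \<le> 1/2" .
    moreover have "1 - norm (z * q ^ j) \<le> norm (1 - z * q ^ j)"
      by (metis norm_one norm_triangle_ineq2)
    ultimately show ?thesis using \<open>\<delta> \<le> 1/2\<close> by linarith
  qed
  ultimately show ?thesis by (intro exI[of _ \<delta>]) auto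
qed

lemma qpoch_upper:
  assumes "norm q \<le> 1"
  shows "norm (qpoch z q m) \<le> (1 + norm z) ^ m"
proof -
  have "norm (qpoch z q m) \<le> (\<Prod>j<m. norm (1 - z * q ^ j))"
    unfolding qpoch_def by (rule norm_prod_le)
  also have "\<dots> \<le> (\<Prod>j<m. 1 + norm z)"
  proof (rule prod_mono)
    fix j
    have "norm (z * q ^ j) \<le> norm z" using assms
      by (simp add: norm_mult norm_power mult_left_le power_le_one)
    hence "norm (1 - z * q ^ j) \<le> 1 + norm z"
      by (metis add_mono norm_one norm_triangle_ineq4 order_trans order_refl)
    thus "0 \<le> norm (1 - z * q ^ j) \<and> norm (1 - z * q ^ j) \<le> 1 + norm z" by simp
  qed
  finally show ?thesis by simp
qed

lemma qpoch_lower: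
  assumes "0 \<le> \<delta>" and "\<forall>j. \<delta> \<le> norm (1 - z * q ^ j)"
  shows "\<delta> ^ m \<le> norm (qpoch z q m)"
proof -
  have "\<delta> ^ m = (\<Prod>j<m. \<delta>)" by simp
  also have "\<dots> \<le> (\<Prod>j<m. norm (1 - z * q ^ j))"
    using assms by (intro prod_mono) auto
  also have "\<dots> = norm (qpoch z q m)" unfolding qpoch_def by (simp add: prod_norm)
  finally show ?thesis .
qed

lemma geom_half_summable: "(\<lambda>(i::nat, j::nat). (1/2::real) ^ i * (1/2) ^ j) summable_on UNIV"
proof -
  have g: "((\<lambda>j. (1/2::real) ^ j) has_sum 2) UNIV"
    using geometric_sums[of "1/2::real"] by (intro sums_nonneg_imp_has_sum) auto
  have "(\<lambda>p. (1/2::real) ^ fst p * (1/2) ^ snd p) summable_on Sigma UNIV (\<lambda>_. UNIV)"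
  proof (rule summable_on_SigmaI[where g = "\<lambda>i. (1/2::real) ^ i * 2"])
    show "((\<lambda>y. (1/2::real) ^ fst (x, y) * (1/2) ^ snd (x, y)) has_sum (1/2) ^ x * 2) UNIV" for x
      using has_sum_cmult_right[OF g, of "(1/2) ^ x"] by simp
    show "(\<lambda>i. (1/2::real) ^ i * 2) summable_on UNIV"
      using has_sum_cmult_left[OF g, of 2] g by (metis summable_on_cmult_left summable_on_def)
  qed auto
  thus ?thesis by (simp add: case_prod_unfold)
qed

lemma pow_rearr:
  fixes A B C p d x y :: real
  shows "A ^ (i + j) * B ^ i * C ^ j / (p ^ i * p ^ j * d ^ (i + j)) * x ^ i * y ^ j
       = (x * (A * B / (p * d))) ^ i * (y * (A * C / (p * d))) ^ j"
  by (simp add: power_add power_mult_distrib power_divide mult_ac)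

definition fam :: "complex \<Rightarrow> complex \<Rightarrow> complex \<Rightarrow> complex \<Rightarrow> complex \<Rightarrow> complex \<Rightarrow> complex \<Rightarrow> nat \<times> nat \<Rightarrow> complex" where
  "fam q a b b' c x y = (\<lambda>(i, j). qpoch a q (i + j) * qpoch b q i * qpoch b' q j
        / (qpoch q q i * qpoch q q j * qpoch c q (i + j)) * x ^ i * y ^ j)"

lemma qAppell1_fam: "qAppell1 q a b b' c x y = infsum (fam q a b b' c x y) UNIV"
  unfolding qAppell1_def fam_def by simp

lemma fam_summable:
  fixes q a b b' c X Y :: complex
  assumes q: "norm q < 1" and dq: "0 < \<delta>q" "\<forall>j. \<delta>q \<le> norm (1 - q * q ^ j)"
    and dc: "0 < \<delta>" "\<forall>j. \<delta> \<le> norm (1 - c * q ^ j)"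
    and X: "norm X * ((1 + norm a) * (1 + norm b) / (\<delta>q * \<delta>)) \<le> 1/2"
    and Y: "norm Y * ((1 + norm a) * (1 + norm b') / (\<delta>q * \<delta>)) \<le> 1/2"
  shows "fam q a b b' c X Y summable_on UNIV"
proof -
  define M1 M2 where "M1 = (1 + norm a) * (1 + norm b) / (\<delta>q * \<delta>)"
    and "M2 = (1 + norm a) * (1 + norm b') / (\<delta>q * \<delta>)"
  have bound: "norm (fam q a b b' c X Y (i, j)) \<le> norm ((1/2::real) ^ i * (1/2) ^ j)" for i j
  proof -
    have q1: "norm q \<le> 1" using q by simp
    have num: "norm (qpoch a q (i + j) * qpoch b q i * qpoch b' q j) \<le>
        (1 + norm a) ^ (i + j) * (1 + norm b) ^ i * (1 + norm b') ^ j"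
      unfolding norm_mult
      by (intro mult_mono qpoch_upper[OF q1]) auto
    have den: "\<delta>q ^ i * \<delta>q ^ j * \<delta> ^ (i + j) \<le> norm (qpoch q q i * qpoch q q j * qpoch c q (i + j))"
      unfolding norm_mult using dq dc
      by (intro mult_mono qpoch_lower) auto
    have Lpos: "0 < \<delta>q ^ i * \<delta>q ^ j * \<delta> ^ (i + j)" using dq dc by simp
    have "norm (fam q a b b' c X Y (i, j)) =
       norm (qpoch a q (i + j) * qpoch b q i * qpoch b' q j) / norm (qpoch q q i * qpoch q q j * qpoch c q (i + j))
        * norm X ^ i * norm Y ^ j"
      by (simp add: fam_def norm_mult norm_divide norm_power)
    also have "\<dots> \<le> (1 + norm a) ^ (i + j) * (1 + norm b) ^ i * (1 + norm b') ^ j / (\<delta>q ^ i * \<delta>q ^ j * \<delta> ^ (i + j))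
        * norm X ^ i * norm Y ^ j"
      by (intro mult_right_mono frac_le num den Lpos) auto
    also have "\<dots> = (norm X * M1) ^ i * (norm Y * M2) ^ j"
      unfolding M1_def M2_def by (rule pow_rearr)
    also have "\<dots> \<le> (1/2) ^ i * (1/2) ^ j"
    proof -
      have "0 \<le> M1" "0 \<le> M2" unfolding M1_def M2_def using dq dc by auto
      hence "0 \<le> norm X * M1" "0 \<le> norm Y * M2" by auto
      moreover have "norm X * M1 \<le> 1/2" "norm Y * M2 \<le> 1/2" using X Y unfolding M1_def M2_def by auto
      ultimately show ?thesis by (intro mult_mono power_mono) auto
    qed
    finally show ?thesis by simp
  qed
  have "(\<lambda>p. norm (fam q a b b' c X Y p)) summable_on UNIV"
  proof (rule summable_on_comparison_test[OF geom_half_summable])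
    fix p :: "nat \<times> nat"
    show "norm (fam q a b b' c X Y p) \<le> (case p of (i, j) \<Rightarrow> (1/2::real) ^ i * (1/2) ^ j)"
      using bound[of "fst p" "snd p"] by (cases p) auto
  qed auto
  thus ?thesis by (rule abs_summable_summable)
qed

lemma infsum_comb:
  fixes f :: "'k \<Rightarrow> 'a \<Rightarrow> complex"
  assumes "finite K" "\<And>k. k \<in> K \<Longrightarrow> f k summable_on A"
  shows "infsum (\<lambda>x. \<Sum>k\<in>K. g k * f k x) A = (\<Sum>k\<in>K. g k * infsum (f k) A)"
proof -
  have "((\<lambda>x. \<Sum>k\<in>K. g k * f k x) has_sum (\<Sum>k\<in>K. g k * infsum (f k) A)) A"
    using assms
  proof (induction K rule: finite_induct)
    case empty
    then show ?case by simp
  next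
    case (insert k K)
    have "((\<lambda>x. g k * f k x) has_sum (g k * infsum (f k) A)) A"
      using insert.prems by (intro has_sum_cmult_right) (auto simp: has_sum_infsum)
    then show ?case using insert by (simp add: has_sum_add)
  qed
  thus ?thesis by (rule infsumI)
qed

lemma nz_of_qpoch: "\<forall>m. qpoch z q m \<noteq> 0 \<Longrightarrow> 1 - z * q ^ j \<noteq> 0"
  by (metis mult_zero_right qpoch_Suc)

lemma fam_split:
  "fam q a b b' c' X Y (i, j) = qpoch a q (i + j) * qpoch b q i * qpoch b' q j / (qpoch q q i * qpoch q q j)
      * X ^ i * Y ^ j * (1 / qpoch c' q (i + j))"
  by (simp add: fam_def divide_inverse mult_ac)

lemma pow_shift:
  fixes x y q :: complex
  shows "(x * q ^ k) ^ i * (y * q ^ k) ^ j = x ^ i * y ^ j * (q ^ k) ^ (i + j)"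
  by (simp only: power_mult_distrib power_add) (simp add: mult_ac)

lemma main_summ:
  fixes q a b b' c :: complex
  assumes q: "0 < norm q" "norm q < 1" and P: "\<forall>m. qpoch c q m \<noteq> 0"
  shows "\<exists>r>0. \<forall>x y k c' m. norm x < r \<and> norm y < r \<and> (\<forall>j. 1 - c' * q ^ j = 1 - c * q ^ (m + j))
            \<longrightarrow> fam q a b b' c' (x * q ^ k) (y * q ^ k) summable_on UNIV"
proof -
  have "\<forall>j. 1 - q * q ^ j \<noteq> 0" using qpoch_qq_nz[OF q(2)] by (metis nz_of_qpoch)
  then obtain \<delta>q where dq: "\<delta>q > 0" "\<forall>j. \<delta>q \<le> norm (1 - q * q ^ j)"
    using delta_exists[OF q(2)] by blast
  have "\<forall>j. 1 - c * q ^ j \<noteq> 0" using P by (metis nz_of_qpoch)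
  then obtain \<delta> where dc: "\<delta> > 0" "\<forall>j. \<delta> \<le> norm (1 - c * q ^ j)"
    using delta_exists[OF q(2)] by blast
  define M1 M2 where "M1 = (1 + norm a) * (1 + norm b) / (\<delta>q * \<delta>)"
    and "M2 = (1 + norm a) * (1 + norm b') / (\<delta>q * \<delta>)"
  have M: "M1 > 0" "M2 > 0" unfolding M1_def M2_def using dq dc
    by (auto intro!: divide_pos_pos mult_pos_pos add_pos_nonneg)
  define r where "r = min (1 / (2 * M1)) (1 / (2 * M2))"
  have "r > 0" using M by (simp add: r_def)
  moreover have "fam q a b b' c' (x * q ^ k) (y * q ^ k) summable_on UNIV"
    if xy: "norm x < r" "norm y < r" and c': "\<forall>j. 1 - c' * q ^ j = 1 - c * q ^ (m + j)" for x y k c' m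
  proof (rule fam_summable[OF q(2) dq, of \<delta>])
    show "0 < \<delta>" by (rule dc)
    show "\<forall>j. \<delta> \<le> norm (1 - c' * q ^ j)" using dc c' by metis
    have qk: "norm (q ^ k) \<le> 1" using q by (simp add: norm_power power_le_one)
    have "norm (x * q ^ k) \<le> norm x" using qk by (simp add: norm_mult mult_left_le)
    hence "norm (x * q ^ k) * M1 \<le> r * M1" using xy M by (intro mult_right_mono) auto
    also have "\<dots> \<le> 1 / (2 * M1) * M1" using M by (intro mult_right_mono) (auto simp: r_def)
    also have "\<dots> = 1/2" using M by simp
    finally show "norm (x * q ^ k) * ((1 + norm a) * (1 + norm b) / (\<delta>q * \<delta>)) \<le> 1/2"
      unfolding M1_def .
    have "norm (y * q ^ k) \<le> norm y" using qk by (simp add: norm_mult mult_left_le)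
    hence "norm (y * q ^ k) * M2 \<le> r * M2" using xy M by (intro mult_right_mono) auto
    also have "\<dots> \<le> 1 / (2 * M2) * M2" using M by (intro mult_right_mono) (auto simp: r_def)
    also have "\<dots> = 1/2" using M by simp
    finally show "norm (y * q ^ k) * ((1 + norm a) * (1 + norm b') / (\<delta>q * \<delta>)) \<le> 1/2"
      unfolding M2_def .
  qed
  ultimately show ?thesis by blast
qed

theorem theorem5:
  fixes q a b b' c :: complex and n :: nat
  assumes "0 < norm q" and "norm q < 1"
  shows "(c \<noteq> 0 \<and> (\<forall>m. qpoch (c / q ^ n) q m \<noteq> 0) \<and> (\<forall>m. qpoch c q m \<noteq> 0)
           \<and> qpoch (q / c) q n \<noteq> 0 \<longrightarrow>
          (\<exists>r>0. \<forall>x y. norm x < r \<and> norm y < r \<longrightarrow>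
             qAppell1 q a b b' (c / q ^ n) x y =
               1 / qpoch (q / c) q n *
               (\<Sum>k=0..n. qbinom q n k * (- c) powi (int k - int n) * q ^ ((n + 1 - k) choose 2)
                   * qAppell1 q a b b' c (x * q ^ k) (y * q ^ k))))
       \<and> ((\<forall>m. qpoch c q m \<noteq> 0) \<longrightarrow>
          (\<exists>r>0. \<forall>x y. norm x < r \<and> norm y < r \<longrightarrow>
             qAppell1 q a b b' (c * q ^ n) x y =
               (\<Sum>k=0..n. qbinom q n k * c ^ k * q ^ (2 * (k choose 2)) * qpoch (c * q ^ k) q (n - k)
                   * qAppell1 q a b b' (c * q ^ k) (x * q ^ k) (y * q ^ k))))"
proof (intro conjI impI)
  have q: "norm q < 1" "q \<noteq> 0" using assms by auto
  {
    assume H: "c \<noteq> 0 \<and> (\<forall>m. qpoch (c / q ^ n) q m \<noteq> 0) \<and> (\<forall>m. qpoch c q m \<noteq> 0) \<and> qpoch (q / c) q n \<noteq> 0"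
    obtain r where r: "r > 0" and rs: "\<And>x y k c' m. norm x < r \<Longrightarrow> norm y < r \<Longrightarrow> (\<forall>j. 1 - c' * q ^ j = 1 - c * q ^ (m + j))
            \<Longrightarrow> fam q a b b' c' (x * q ^ k) (y * q ^ k) summable_on UNIV"
      using main_summ[OF assms, of c a b b'] H by blast
    show "\<exists>r>0. \<forall>x y. norm x < r \<and> norm y < r \<longrightarrow>
             qAppell1 q a b b' (c / q ^ n) x y =
               1 / qpoch (q / c) q n *
               (\<Sum>k=0..n. qbinom q n k * (- c) powi (int k - int n) * q ^ ((n + 1 - k) choose 2)
                   * qAppell1 q a b b' c (x * q ^ k) (y * q ^ k))"
    proof (intro exI[of _ r] conjI allI impI)
      show "r > 0" by (rule r)
      fix x y :: complex assume xy: "norm x < r \<and> norm y < r"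
      define g where "g k = 1 / qpoch (q / c) q n * (qbinom q n k * (- c) powi (int k - int n) * q ^ ((n + 1 - k) choose 2))" for k
      have summ: "fam q a b b' c (x * q ^ k) (y * q ^ k) summable_on UNIV" for k
        using rs[where x=x and y=y and c'=c and k=k and m=0] xy by (simp add: power_add mult.assoc)
      have fam_eq: "fam q a b b' (c / q ^ n) x y = (\<lambda>p. \<Sum>k\<in>{0..n}. g k * fam q a b b' c (x * q ^ k) (y * q ^ k) p)"
      proof
        fix p :: "nat \<times> nat"
        obtain i j where p: "p = (i, j)" by (cases p)
        define Hh where "Hh = qpoch a q (i + j) * qpoch b q i * qpoch b' q j / (qpoch q q i * qpoch q q j)"
        have L1: "1 / qpoch (c / q ^ n) q (i + j) = 1 / qpoch (q / c) q n * (\<Sum>k=0..n. qbinom q n k * (- c) powi (int k - int n)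
            * q ^ ((n + 1 - k) choose 2) * (q ^ k) ^ (i + j) / qpoch c q (i + j))"
          using H by (intro scalarL1 q) auto
        have "fam q a b b' (c / q ^ n) x y p = Hh * x ^ i * y ^ j * (1 / qpoch (c / q ^ n) q (i + j))"
          unfolding p fam_split Hh_def ..
        also have "\<dots> = (\<Sum>k=0..n. Hh * x ^ i * y ^ j * (1 / qpoch (q / c) q n * (qbinom q n k * (- c) powi (int k - int n)
            * q ^ ((n + 1 - k) choose 2) * (q ^ k) ^ (i + j) / qpoch c q (i + j))))"
          unfolding L1 by (simp add: sum_distrib_left)
        also have "\<dots> = (\<Sum>k\<in>{0..n}. g k * fam q a b b' c (x * q ^ k) (y * q ^ k) p)"
        proof (rule sum.cong[OF refl])
          fix k
          show "Hh * x ^ i * y ^ j * (1 / qpoch (q / c) q n * (qbinom q n k * (- c) powi (int k - int n)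
            * q ^ ((n + 1 - k) choose 2) * (q ^ k) ^ (i + j) / qpoch c q (i + j))) = g k * fam q a b b' c (x * q ^ k) (y * q ^ k) p"
            unfolding p fam_split g_def Hh_def[symmetric] mult.assoc[of Hh] pow_shift
            by (simp add: divide_inverse mult_ac)
        qed
        finally show "fam q a b b' (c / q ^ n) x y p = (\<Sum>k\<in>{0..n}. g k * fam q a b b' c (x * q ^ k) (y * q ^ k) p)" .
      qed
      have "qAppell1 q a b b' (c / q ^ n) x y = (\<Sum>k\<in>{0..n}. g k * qAppell1 q a b b' c (x * q ^ k) (y * q ^ k))"
        unfolding qAppell1_fam fam_eq by (rule infsum_comb) (auto intro: summ)
      also have "\<dots> = 1 / qpoch (q / c) q n *
               (\<Sum>k=0..n. qbinom q n k * (- c) powi (int k - int n) * q ^ ((n + 1 - k) choose 2)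
                   * qAppell1 q a b b' c (x * q ^ k) (y * q ^ k))"
        unfolding g_def by (simp add: sum_distrib_left mult_ac)
      finally show "qAppell1 q a b b' (c / q ^ n) x y = 1 / qpoch (q / c) q n *
               (\<Sum>k=0..n. qbinom q n k * (- c) powi (int k - int n) * q ^ ((n + 1 - k) choose 2)
                   * qAppell1 q a b b' c (x * q ^ k) (y * q ^ k))" .
    qed
  }
  {
    assume P: "\<forall>m. qpoch c q m \<noteq> 0"
    obtain r where r: "r > 0" and rs: "\<And>x y k c' m. norm x < r \<Longrightarrow> norm y < r \<Longrightarrow> (\<forall>j. 1 - c' * q ^ j = 1 - c * q ^ (m + j))
            \<Longrightarrow> fam q a b b' c' (x * q ^ k) (y * q ^ k) summable_on UNIV"
      using main_summ[OF assms P, of a b b'] by blast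
    show "\<exists>r>0. \<forall>x y. norm x < r \<and> norm y < r \<longrightarrow>
             qAppell1 q a b b' (c * q ^ n) x y =
               (\<Sum>k=0..n. qbinom q n k * c ^ k * q ^ (2 * (k choose 2)) * qpoch (c * q ^ k) q (n - k)
                   * qAppell1 q a b b' (c * q ^ k) (x * q ^ k) (y * q ^ k))"
    proof (intro exI[of _ r] conjI allI impI)
      show "r > 0" by (rule r)
      fix x y :: complex assume xy: "norm x < r \<and> norm y < r"
      define g where "g k = qbinom q n k * c ^ k * q ^ (2 * (k choose 2)) * qpoch (c * q ^ k) q (n - k)" for k
      have summ: "fam q a b b' (c * q ^ k) (x * q ^ k) (y * q ^ k) summable_on UNIV" for k
        using rs[where x=x and y=y and c'="c * q ^ k" and k=k and m=k] xy by (simp add: power_add mult.assoc)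
      have fam_eq: "fam q a b b' (c * q ^ n) x y = (\<lambda>p. \<Sum>k\<in>{0..n}. g k * fam q a b b' (c * q ^ k) (x * q ^ k) (y * q ^ k) p)"
      proof
        fix p :: "nat \<times> nat"
        obtain i j where p: "p = (i, j)" by (cases p)
        define Hh where "Hh = qpoch a q (i + j) * qpoch b q i * qpoch b' q j / (qpoch q q i * qpoch q q j)"
        have L2: "1 / qpoch (c * q ^ n) q (i + j) = (\<Sum>k=0..n. qbinom q n k * c ^ k * q ^ (2 * (k choose 2))
            * qpoch (c * q ^ k) q (n - k) * (q ^ k) ^ (i + j) / qpoch (c * q ^ k) q (i + j))"
          using P by (intro scalarL2 q)
        have "fam q a b b' (c * q ^ n) x y p = Hh * x ^ i * y ^ j * (1 / qpoch (c * q ^ n) q (i + j))"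
          unfolding p fam_split Hh_def ..
        also have "\<dots> = (\<Sum>k=0..n. Hh * x ^ i * y ^ j * (qbinom q n k * c ^ k * q ^ (2 * (k choose 2))
            * qpoch (c * q ^ k) q (n - k) * (q ^ k) ^ (i + j) / qpoch (c * q ^ k) q (i + j)))"
          unfolding L2 by (simp add: sum_distrib_left)
        also have "\<dots> = (\<Sum>k\<in>{0..n}. g k * fam q a b b' (c * q ^ k) (x * q ^ k) (y * q ^ k) p)"
        proof (rule sum.cong[OF refl])
          fix k
          show "Hh * x ^ i * y ^ j * (qbinom q n k * c ^ k * q ^ (2 * (k choose 2))
            * qpoch (c * q ^ k) q (n - k) * (q ^ k) ^ (i + j) / qpoch (c * q ^ k) q (i + j)) = g k * fam q a b b' (c * q ^ k) (x * q ^ k) (y * q ^ k) p"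
            unfolding p fam_split g_def Hh_def[symmetric] mult.assoc[of Hh] pow_shift
            by (simp add: divide_inverse mult_ac)
        qed
        finally show "fam q a b b' (c * q ^ n) x y p = (\<Sum>k\<in>{0..n}. g k * fam q a b b' (c * q ^ k) (x * q ^ k) (y * q ^ k) p)" .
      qed
      have "qAppell1 q a b b' (c * q ^ n) x y = (\<Sum>k\<in>{0..n}. g k * qAppell1 q a b b' (c * q ^ k) (x * q ^ k) (y * q ^ k))"
        unfolding qAppell1_fam fam_eq by (rule infsum_comb) (auto intro: summ)
      also have "\<dots> = (\<Sum>k=0..n. qbinom q n k * c ^ k * q ^ (2 * (k choose 2)) * qpoch (c * q ^ k) q (n - k)
                   * qAppell1 q a b b' (c * q ^ k) (x * q ^ k) (y * q ^ k))"
        unfolding g_def ..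
      finally show "qAppell1 q a b b' (c * q ^ n) x y = (\<Sum>k=0..n. qbinom q n k * c ^ k * q ^ (2 * (k choose 2)) * qpoch (c * q ^ k) q (n - k)
                   * qAppell1 q a b b' (c * q ^ k) (x * q ^ k) (y * q ^ k))" .
    qed
  }
qed

end
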